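(* Let $\widetilde{\Sigma}_1,\ldots,\widetilde{\Sigma}_n$ be pairwise disjoint visibly pushdown alphabets, $\widetilde{\Sigma}=\widetilde{\Sigma}_1\uplus\cdots\uplus\widetilde{\Sigma}_n$, and let $P_i\subseteq\widetilde{\Sigma}_i^*$ be well-matched visibly pushdown languages. Let $\mathcal{M}$ be a semantics on a state set $C$ in which every call and every return of each $\widetilde{\Sigma}_i$ belongs to $\widetilde{\Sigma}_i^{\mathsf{indep}}$. If every $P_i$ is tail-independent (or, respectively, every $P_i$ is head-independent), then for all $\mathsf{pre},\mathsf{post}\subseteq C$: $\{\mathsf{pre}\}\,P_1\bowtie\cdots\bowtie P_n\,\{\mathsf{post}\}$ implies $\{\mathsf{pre}\}\,P_1\parallel\cdots\parallel P_n\,\{\mathsf{post}\}$.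
   Context: A visibly pushdown (VP) alphabet is a finite alphabet partitioned into calls, returns and internals; $\widetilde{\Sigma}$ has as calls/returns/internals the unions. Calls and returns in a word are matched like opening and closing parentheses (internals ignored); a word is well-matched if all calls and returns are matched. Visibly pushdown languages are those accepted by pushdown automata that push on calls, pop on returns and leave the stack unchanged on internals. Shuffle: $P_1\parallel\cdots\parallel P_n=\{w\in\widetilde{\Sigma}^*:\Pi_{\widetilde{\Sigma}_i}(w)\in P_i\ \forall i\}$, $\Pi_{\widetilde{\Sigma}_i}$ erasing letters outside $\widetilde{\Sigma}_i$; a word is well-nested if every matched call–return pair consists of letters from the same $\widetilde{\Sigma}_k$; $P_1\bowtie\cdots\bowtie P_n$ is the set of well-nested words of the shuffle. A semantics is a map $\mathcal{M}$ from letters of $\widetilde{\Sigma}$ to binary relations on a set $C$ of states, extended to words by relational composition ($\mathcal{M}(\epsilon)$ is the identity, $\mathcal{M}(wa)$ is $\mathcal{M}(w)$ followed by $\mathcal{M}(a)$). For $\mathsf{pre},\mathsf{post}\subseteq C$ and a language $L$, $\{\mathsf{pre}\}L\{\mathsf{post}\}$ means: for all $\rho\in L$ and $(s,s')\in\mathcal{M}(\rho)$, $s\in\mathsf{pre}$ implies $s'\in\mathsf{post}$. Letters $a,b$ soundly commute if $\mathcal{M}(ab)=\mathcal{M}(ba)$. $\widetilde{\Sigma}_i^{\mathsf{indep}}$ is the set of letters of $\widetilde{\Sigma}_i$ that soundly commute with every letter of every $\widetilde{\Sigma}_j$, $j\ne i$. $P_i$ is tail-independent (resp. head-independent) if every $\rho\in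 P_i$ can be written $\rho=uv$, $u,v\in\widetilde{\Sigma}_i^*$, such that (1) all calls are in $u$ and all returns in $v$, except those at a position $j$ such that all letters between $j$ and its matching position are in $\widetilde{\Sigma}_i^{\mathsf{indep}}$; and (2) all letters of $v$ (resp. of $u$) are in $\widetilde{\Sigma}_i^{\mathsf{indep}}$. *)

theory Defs
  imports Main
begin

definition vp_alphabet :: "'a set \<Rightarrow> 'a set \<Rightarrow> 'a set \<Rightarrow> bool" where
  "vp_alphabet Cl Rt It \<longleftrightarrow> finite Cl \<and> finite Rt \<and> finite It \<and>
     Cl \<inter> Rt = {} \<and> Cl \<inter> It = {} \<and> Rt \<inter> It = {}"

inductive well_matched :: "'a set \<Rightarrow> 'a set \<Rightarrow> 'a list \<Rightarrow> bool"
  for Cl Rt where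
  wm_nil: "well_matched Cl Rt []"
| wm_int: "a \<notin> Cl \<Longrightarrow> a \<notin> Rt \<Longrightarrow> well_matched Cl Rt [a]"
| wm_nest: "c \<in> Cl \<Longrightarrow> r \<in> Rt \<Longrightarrow> well_matched Cl Rt u \<Longrightarrow>
            well_matched Cl Rt ([c] @ u @ [r])"
| wm_app: "well_matched Cl Rt u \<Longrightarrow> well_matched Cl Rt v \<Longrightarrow> well_matched Cl Rt (u @ v)"

definition matched :: "'a set \<Rightarrow> 'a set \<Rightarrow> 'a list \<Rightarrow> nat \<Rightarrow> nat \<Rightarrow> bool" where
  "matched Cl Rt w j k \<longleftrightarrow> j < k \<and> k < length w \<and> w ! j \<in> Cl \<and> w ! k \<in> Rt \<and>
     well_matched Cl Rt (take (k - j - 1) (drop (j + 1) w))"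

record ('q, 'a, 's) vpa =
  vpa_init :: "'q set"
  vpa_final :: "'q set"
  vpa_call :: "('q \<times> 'a \<times> 'q \<times> 's) set"
  vpa_ret :: "('q \<times> 'a \<times> 's option \<times> 'q) set"   (* None: return on empty stack *)
  vpa_int :: "('q \<times> 'a \<times> 'q) set"

inductive vpa_run :: "('q, 'a, 's) vpa \<Rightarrow> 'a set \<Rightarrow> 'a set \<Rightarrow> 'a set \<Rightarrow>
    'q \<times> 's list \<Rightarrow> 'a list \<Rightarrow> 'q \<times> 's list \<Rightarrow> bool"
  for A Cl Rt It where
  run_nil: "vpa_run A Cl Rt It cfg [] cfg"
| run_call: "a \<in> Cl \<Longrightarrow> (q, a, q', g) \<in> vpa_call A \<Longrightarrow>
     vpa_run A Cl Rt It (q', g # st) w cfg \<Longrightarrow> vpa_run A Cl Rt It (q, st) (a # w) cfg"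
| run_ret: "a \<in> Rt \<Longrightarrow> (q, a, Some g, q') \<in> vpa_ret A \<Longrightarrow>
     vpa_run A Cl Rt It (q', st) w cfg \<Longrightarrow> vpa_run A Cl Rt It (q, g # st) (a # w) cfg"
| run_ret_empty: "a \<in> Rt \<Longrightarrow> (q, a, None, q') \<in> vpa_ret A \<Longrightarrow>
     vpa_run A Cl Rt It (q', []) w cfg \<Longrightarrow> vpa_run A Cl Rt It (q, []) (a # w) cfg"
| run_int: "a \<in> It \<Longrightarrow> (q, a, q') \<in> vpa_int A \<Longrightarrow>
     vpa_run A Cl Rt It (q', st) w cfg \<Longrightarrow> vpa_run A Cl Rt It (q, st) (a # w) cfg"

definition vpa_lang :: "('q, 'a, 's) vpa \<Rightarrow> 'a set \<Rightarrow> 'a set \<Rightarrow> 'a set \<Rightarrow> 'a list set" where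
  "vpa_lang A Cl Rt It = {w. \<exists>q0 \<in> vpa_init A. \<exists>q st.
      q \<in> vpa_final A \<and> vpa_run A Cl Rt It (q0, []) w (q, st)}"

(* L is a visibly pushdown language over the VP alphabet (Cl, Rt, It):
   accepted by a VPA with finitely many states and stack symbols
   (finite transition relations, finite initial set). *)
definition vpl :: "'a set \<Rightarrow> 'a set \<Rightarrow> 'a set \<Rightarrow> 'a list set \<Rightarrow> bool" where
  "vpl Cl Rt It L \<longleftrightarrow> (\<exists>A :: (nat, 'a, nat) vpa.
      finite (vpa_init A) \<and> finite (vpa_call A) \<and> finite (vpa_ret A) \<and> finite (vpa_int A) \<and>
      L = vpa_lang A Cl Rt It \<inter> lists (Cl \<union> Rt \<union> It))"

definition sem_word :: "('a \<Rightarrow> ('c \<times> 'c) set) \<Rightarrow> 'a list \<Rightarrow> ('c \<times> 'c) set" where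
  "sem_word M w = foldl (\<lambda>R a. R O M a) Id w"

definition hoare :: "('a \<Rightarrow> ('c \<times> 'c) set) \<Rightarrow> 'c set \<Rightarrow> 'a list set \<Rightarrow> 'c set \<Rightarrow> bool" where
  "hoare M pre L post \<longleftrightarrow>
     (\<forall>\<rho> \<in> L. \<forall>s s'. (s, s') \<in> sem_word M \<rho> \<longrightarrow> s \<in> pre \<longrightarrow> s' \<in> post)"

definition sound_commute :: "('a \<Rightarrow> ('c \<times> 'c) set) \<Rightarrow> 'a \<Rightarrow> 'a \<Rightarrow> bool" where
  "sound_commute M a b \<longleftrightarrow> sem_word M [a, b] = sem_word M [b, a]"

definition sigma :: "(nat \<Rightarrow> 'a set) \<Rightarrow> (nat \<Rightarrow> 'a set) \<Rightarrow> (nat \<Rightarrow> 'a set) \<Rightarrow> nat \<Rightarrow> 'a set" where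
  "sigma Cl Rt It i = Cl i \<union> Rt i \<union> It i"

definition indep :: "nat \<Rightarrow> (nat \<Rightarrow> 'a set) \<Rightarrow> (nat \<Rightarrow> 'a set) \<Rightarrow> (nat \<Rightarrow> 'a set) \<Rightarrow>
    ('a \<Rightarrow> ('c \<times> 'c) set) \<Rightarrow> nat \<Rightarrow> 'a set" where
  "indep n Cl Rt It M i = {a \<in> sigma Cl Rt It i.
      \<forall>j < n. j \<noteq> i \<longrightarrow> (\<forall>b \<in> sigma Cl Rt It j. sound_commute M a b)}"

definition shuffle :: "nat \<Rightarrow> (nat \<Rightarrow> 'a set) \<Rightarrow> (nat \<Rightarrow> 'a set) \<Rightarrow> (nat \<Rightarrow> 'a set) \<Rightarrow>
    (nat \<Rightarrow> 'a list set) \<Rightarrow> 'a list set" where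
  "shuffle n Cl Rt It P = {w \<in> lists (\<Union>i<n. sigma Cl Rt It i).
      \<forall>i<n. filter (\<lambda>x. x \<in> sigma Cl Rt It i) w \<in> P i}"

definition well_nested :: "nat \<Rightarrow> (nat \<Rightarrow> 'a set) \<Rightarrow> (nat \<Rightarrow> 'a set) \<Rightarrow> (nat \<Rightarrow> 'a set) \<Rightarrow>
    'a list \<Rightarrow> bool" where
  "well_nested n Cl Rt It w \<longleftrightarrow> (\<forall>j k. matched (\<Union>i<n. Cl i) (\<Union>i<n. Rt i) w j k \<longrightarrow>
      (\<exists>i<n. w ! j \<in> sigma Cl Rt It i \<and> w ! k \<in> sigma Cl Rt It i))"

definition nested_shuffle :: "nat \<Rightarrow> (nat \<Rightarrow> 'a set) \<Rightarrow> (nat \<Rightarrow> 'a set) \<Rightarrow> (nat \<Rightarrow> 'a set) \<Rightarrow>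
    (nat \<Rightarrow> 'a list set) \<Rightarrow> 'a list set" where
  "nested_shuffle n Cl Rt It P = {w \<in> shuffle n Cl Rt It P. well_nested n Cl Rt It w}"

definition indep_split :: "nat \<Rightarrow> (nat \<Rightarrow> 'a set) \<Rightarrow> (nat \<Rightarrow> 'a set) \<Rightarrow> (nat \<Rightarrow> 'a set) \<Rightarrow>
    ('a \<Rightarrow> ('c \<times> 'c) set) \<Rightarrow> nat \<Rightarrow> 'a list \<Rightarrow> 'a list \<Rightarrow> bool" where
  "indep_split n Cl Rt It M i u v \<longleftrightarrow>
     (let \<rho> = u @ v in
      \<forall>j < length \<rho>.
        ((\<rho> ! j \<in> Cl i \<and> length u \<le> j) \<or> (\<rho> ! j \<in> Rt i \<and> j < length u)) \<longrightarrow>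
        (\<exists>k. (matched (Cl i) (Rt i) \<rho> j k \<or> matched (Cl i) (Rt i) \<rho> k j) \<and>
             (\<forall>l. min j k \<le> l \<and> l \<le> max j k \<longrightarrow> \<rho> ! l \<in> indep n Cl Rt It M i)))"

definition tail_independent :: "nat \<Rightarrow> (nat \<Rightarrow> 'a set) \<Rightarrow> (nat \<Rightarrow> 'a set) \<Rightarrow> (nat \<Rightarrow> 'a set) \<Rightarrow>
    ('a \<Rightarrow> ('c \<times> 'c) set) \<Rightarrow> (nat \<Rightarrow> 'a list set) \<Rightarrow> nat \<Rightarrow> bool" where
  "tail_independent n Cl Rt It M P i \<longleftrightarrow> (\<forall>\<rho> \<in> P i. \<exists>u v. \<rho> = u @ v \<and>
     u \<in> lists (sigma Cl Rt It i) \<and> v \<in> lists (sigma Cl Rt It i) \<and>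
     indep_split n Cl Rt It M i u v \<and> set v \<subseteq> indep n Cl Rt It M i)"

definition head_independent :: "nat \<Rightarrow> (nat \<Rightarrow> 'a set) \<Rightarrow> (nat \<Rightarrow> 'a set) \<Rightarrow> (nat \<Rightarrow> 'a set) \<Rightarrow>
    ('a \<Rightarrow> ('c \<times> 'c) set) \<Rightarrow> (nat \<Rightarrow> 'a list set) \<Rightarrow> nat \<Rightarrow> bool" where
  "head_independent n Cl Rt It M P i \<longleftrightarrow> (\<forall>\<rho> \<in> P i. \<exists>u v. \<rho> = u @ v \<and>
     u \<in> lists (sigma Cl Rt It i) \<and> v \<in> lists (sigma Cl Rt It i) \<and>
     indep_split n Cl Rt It M i u v \<and> set u \<subseteq> indep n Cl Rt It M i)"

end

theory Submission
  imports Defs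
begin


fun bal :: "'a set \<Rightarrow> 'a set \<Rightarrow> 'a list \<Rightarrow> int" where
  "bal C R [] = 0"
| "bal C R (a # w) = (if a \<in> C then 1 else if a \<in> R then -1 else 0) + bal C R w"

lemma bal_append[simp]: "bal C R (x @ y) = bal C R x + bal C R y"
  by (induction x) auto

lemma bal_rev[simp]: "bal C R (rev x) = bal C R x"
  by (induction x) auto

lemma bal_swap: "C \<inter> R = {} \<Longrightarrow> bal R C x = - bal C R x"
  by (induction x) auto

lemma wm_bal:
  assumes "well_matched C R w" "C \<inter> R = {}"
  shows "bal C R w = 0 \<and> (\<forall>m. bal C R (take m w) \<ge> 0)"
  using assms
proof (induction rule: well_matched.induct)
  case wm_nil then show ?case by simp
next
  case (wm_int a) then show ?case by (auto simp: take_Cons')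
next
  case (wm_nest c r u)
  have cr: "c \<notin> R" "r \<notin> C" using wm_nest by auto
  have b: "bal C R ([c] @ u @ [r]) = 0" using wm_nest cr by simp
  have "bal C R (take m ([c] @ u @ [r])) \<ge> 0" for m
  proof (cases m)
    case 0 then show ?thesis by simp
  next
    case (Suc m')
    show ?thesis
    proof (cases "m' \<le> length u")
      case True
      then have "take m ([c] @ u @ [r]) = c # take m' u" using Suc by simp
      then show ?thesis using wm_nest cr by simp
    next
      case False
      then have "take m ([c] @ u @ [r]) = [c] @ u @ [r]" using Suc by simp
      then show ?thesis using b by simp
    qed
  qed
  then show ?case using b by blast
next
  case (wm_app u v)
  have "bal C R (take m (u @ v)) \<ge> 0" for m
    using wm_app by (auto simp: take_append)
  then show ?case using wm_app by simp
qed

lemma wm_rev: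
  assumes "well_matched C R w" shows "well_matched R C (rev w)"
  using assms
proof (induction rule: well_matched.induct)
  case (wm_nest c r u)
  then show ?case using well_matched.wm_nest[of r R c C "rev u"] by simp
next
  case (wm_app u v) then show ?case using well_matched.wm_app by fastforce
qed (auto intro: well_matched.intros)



lemma foldl_O: fixes M :: "'a \<Rightarrow> ('c \<times> 'c) set" and R :: "('c \<times> 'c) set" shows "foldl (\<lambda>R a. R O M a) R w = R O foldl (\<lambda>R a. R O M a) Id w"
proof (induction w arbitrary: R)
  case (Cons a w)
  show ?case using Cons[of "R O M a"] Cons[of "Id O M a"] by (simp add: O_assoc)
qed simp

lemma sem_Cons: "sem_word M (a # w) = M a O sem_word M w"
  unfolding sem_word_def using foldl_O[of M "Id O M a" w] by simp

lemma sem_Nil: "sem_word M [] = Id" unfolding sem_word_def by simp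

lemma sem_append: "sem_word M (x @ y) = sem_word M x O sem_word M y"
  by (induction x) (auto simp: sem_Cons sem_Nil O_assoc)

lemma sc_sym: "sound_commute M a b \<longleftrightarrow> sound_commute M b a"
  unfolding sound_commute_def by auto

lemma sem_move:
  assumes "\<forall>b\<in>set p. sound_commute M a b"
  shows "sem_word M (p @ [a]) = sem_word M (a # p)"
  using assms
proof (induction p)
  case Nil then show ?case by simp
next
  case (Cons b p)
  have "sem_word M [a, b] = sem_word M [b, a]" using Cons.prems unfolding sound_commute_def by simp
  then have ab: "M a O M b = M b O M a" by (simp add: sem_Cons sem_Nil)
  have "sem_word M ((b # p) @ [a]) = M b O sem_word M (a # p)" using Cons by (simp add: sem_Cons)
  also have "\<dots> = (M b O M a) O sem_word M p" by (simp add: sem_Cons O_assoc)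
  also have "\<dots> = sem_word M (a # b # p)" using ab by (simp add: sem_Cons O_assoc[symmetric])
  finally show ?case .
qed

definition fp :: "'a \<Rightarrow> 'a \<Rightarrow> 'a list \<Rightarrow> 'a list" where
  "fp x y w = filter (\<lambda>z. z = x \<or> z = y) w"

lemma proj_sem:
  assumes "\<forall>x y. (x = y \<or> \<not> sound_commute M x y) \<longrightarrow> fp x y w = fp x y w'"
  shows "sem_word M w = sem_word M w'"
  using assms
proof (induction w' arbitrary: w)
  case Nil
  have "w = []"
  proof (rule ccontr)
    assume "w \<noteq> []"
    then obtain x where "x \<in> set w" by (cases w) auto
    then have "fp x x w \<noteq> []" unfolding fp_def by (auto simp: filter_empty_conv)
    then show False using Nil[rule_format, of x x] by (simp add: fp_def)
  qed
  then show ?case by simp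
next
  case (Cons a r)
  have "fp a a w = fp a a (a # r)" using Cons.prems[rule_format, of a a] by simp
  then have "a \<in> set w" proof -
    have "a \<in> set (fp a a (a # r))" by (simp add: fp_def)
    then have "a \<in> set (fp a a w)" using \<open>fp a a w = fp a a (a # r)\<close> by simp
    then show ?thesis unfolding fp_def by simp
  qed
  then obtain p q where w: "w = p @ a # q" and ap: "a \<notin> set p" by (meson split_list_first)
  have com: "sound_commute M a b" if b: "b \<in> set p" for b
  proof (rule ccontr)
    assume nc: "\<not> sound_commute M a b"
    have "fp a b w = fp a b (a # r)" using Cons.prems[rule_format, of a b] nc by simp
    moreover have "fp a b (a # r) = a # fp a b r" by (simp add: fp_def)
    moreover have "fp a b p \<noteq> []" using b unfolding fp_def by (auto simp: filter_empty_conv)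
    moreover have "set (fp a b p) \<subseteq> {b}" using ap unfolding fp_def by auto
    ultimately show False using ap b unfolding w fp_def
      by (cases "filter (\<lambda>z. z = a \<or> z = b) p") auto
  qed
  have "sem_word M w = sem_word M (p @ [a]) O sem_word M q" by (simp add: w sem_append[symmetric])
  also have "\<dots> = M a O sem_word M (p @ q)" using sem_move[of p M a] com
    by (simp add: sem_Cons sem_append O_assoc)
  finally have e1: "sem_word M w = M a O sem_word M (p @ q)" .
  have "fp x y (p @ q) = fp x y r" if D: "x = y \<or> \<not> sound_commute M x y" for x y
  proof (cases "a = x \<or> a = y")
    case True
    have "fp x y p = []"
    proof -
      have "\<not> (b = x \<or> b = y)" if "b \<in> set p" for b
      proof
        assume bxy: "b = x \<or> b = y"
        have "b \<noteq> a" using ap that by auto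
        then have "\<not> sound_commute M a b" using D True bxy sc_sym by metis
        then show False using com that by blast
      qed
      then show ?thesis unfolding fp_def by (auto simp: filter_empty_conv)
    qed
    moreover have "fp x y w = fp x y (a # r)" using Cons.prems[rule_format, of x y] D by simp
    ultimately show ?thesis using True unfolding w fp_def by auto
  next
    case False
    have "fp x y w = fp x y (a # r)" using Cons.prems[rule_format, of x y] D by simp
    then show ?thesis using False unfolding w fp_def by auto
  qed
  then have "\<forall>x y. (x = y \<or> \<not> sound_commute M x y) \<longrightarrow> fp x y (p @ q) = fp x y r" by blast
  then have "sem_word M (p @ q) = sem_word M r" by (rule Cons.IH)
  then show ?case using e1 by (simp add: sem_Cons)
qed



fun run :: "'a set \<Rightarrow> 'a set \<Rightarrow> ('a \<Rightarrow> nat) \<Rightarrow> nat list \<Rightarrow> 'a list \<Rightarrow> nat list option" where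
  "run C R cmp S [] = Some S"
| "run C R cmp S (a # w) = (if a \<in> C then run C R cmp (cmp a # S) w
     else if a \<in> R then (case S of [] \<Rightarrow> None | t # S' \<Rightarrow> if t = cmp a then run C R cmp S' w else None)
     else run C R cmp S w)"

lemma run_append: "run C R cmp S (x @ y) = (case run C R cmp S x of None \<Rightarrow> None | Some S' \<Rightarrow> run C R cmp S' y)"
  by (induction x arbitrary: S) (auto split: list.splits option.splits)

lemma run_wm:
  assumes "well_matched C R s" "C \<inter> R = {}" "run C R cmp S s \<noteq> None"
  shows "run C R cmp S s = Some S"
  using assms
proof (induction arbitrary: S rule: well_matched.induct)
  case (wm_nest c r u)
  have rc: "r \<notin> C" using wm_nest by auto
  have e: "run C R cmp S ([c] @ u @ [r]) = run C R cmp (cmp c # S) (u @ [r])" using wm_nest by simp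
  show ?case
  proof (cases "run C R cmp (cmp c # S) u")
    case None then show ?thesis using wm_nest.prems(2) e by (simp add: run_append)
  next
    case (Some T)
    then have T: "T = cmp c # S" using wm_nest.IH[of "cmp c # S"] wm_nest.prems(1) by simp
    have "run C R cmp S ([c] @ u @ [r]) = run C R cmp (cmp c # S) [r]"
      using e Some T by (simp add: run_append)
    then show ?thesis using wm_nest.prems(2) rc wm_nest.hyps(2) by (auto split: if_splits)
  qed
next
  case (wm_app u v)
  show ?case
  proof (cases "run C R cmp S u")
    case None then show ?thesis using wm_app.prems(2) by (simp add: run_append)
  next
    case (Some T)
    then have "T = S" using wm_app.IH(1)[of S] wm_app.prems(1) by simp
    then have e: "run C R cmp S (u @ v) = run C R cmp S v" using Some by (simp add: run_append)
    then show ?thesis using wm_app.IH(2)[of S] wm_app.prems by simp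
  qed
qed auto

lemma run_nested:
  assumes CR: "CL \<inter> RT = {}"
    and r: "run CL RT cmp [] w \<noteq> None"
    and m: "matched CL RT w j k"
  shows "cmp (w ! j) = cmp (w ! k)"
proof -
  from m have jk: "j < k" "k < length w" "w ! j \<in> CL" "w ! k \<in> RT"
    and inner: "well_matched CL RT (take (k - j - 1) (drop (j + 1) w))"
    unfolding matched_def by auto
  define s where "s = take (k - j - 1) (drop (j + 1) w)"
  define rest where "rest = [w ! j] @ s @ [w ! k] @ drop (k + 1) w"
  have w: "take j w @ rest = w"
  proof -
    have d1: "drop j w = w ! j # drop (j + 1) w" using jk by (simp add: Cons_nth_drop_Suc)
    have d2: "drop (k - j - 1) (drop (j + 1) w) = drop k w" using jk by (simp add: drop_drop)
    have d3: "drop (j + 1) w = s @ drop k w" unfolding s_def using d2 by (metis append_take_drop_id)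
    have d4: "drop k w = w ! k # drop (k + 1) w" using jk by (simp add: Cons_nth_drop_Suc)
    show ?thesis unfolding rest_def using d1 d3 d4 by (metis append_take_drop_id append_Cons append_Nil)
  qed
  have rw: "run CL RT cmp [] w = (case run CL RT cmp [] (take j w) of None \<Rightarrow> None | Some S' \<Rightarrow> run CL RT cmp S' rest)"
    using run_append[of CL RT cmp "[]" "take j w" rest] unfolding w .
  obtain S0 where S0: "run CL RT cmp [] (take j w) = Some S0"
    using r rw by (cases "run CL RT cmp [] (take j w)") auto
  have r2: "run CL RT cmp (cmp (w ! j) # S0) (s @ [w ! k] @ drop (k + 1) w) \<noteq> None"
    using r S0 jk rw unfolding rest_def by simp
  obtain T where T: "run CL RT cmp (cmp (w ! j) # S0) s = Some T"
    using r2 by (cases "run CL RT cmp (cmp (w ! j) # S0) s") (auto simp: run_append)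
  have "T = cmp (w ! j) # S0" using run_wm[OF inner[folded s_def] CR, of cmp "cmp (w ! j) # S0"] T by simp
  then have "run CL RT cmp (cmp (w ! j) # S0) (w ! k # drop (k + 1) w) \<noteq> None"
    using r2 T by (simp add: run_append)
  moreover have "w ! k \<notin> CL" using jk CR by auto
  ultimately show ?thesis using jk by (auto split: if_splits)
qed

lemma matched_rev:
  assumes "matched C R (rev w) j k"
  shows "matched R C w (length w - 1 - k) (length w - 1 - j)"
proof -
  from assms have jk: "j < k" "k < length w" "rev w ! j \<in> C" "rev w ! k \<in> R"
    and inner: "well_matched C R (take (k - j - 1) (drop (j + 1) (rev w)))"
    unfolding matched_def by auto
  have e: "rev (take (k - j - 1) (drop (j + 1) (rev w))) = take (k - j - 1) (drop (length w - 1 - k + 1) w)"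
  proof (rule nth_equalityI)
    show "length (rev (take (k - j - 1) (drop (j + 1) (rev w)))) = length (take (k - j - 1) (drop (length w - 1 - k + 1) w))"
      using jk by simp
  next
    fix i assume "i < length (rev (take (k - j - 1) (drop (j + 1) (rev w))))"
    then have i: "i < k - j - 1" using jk by simp
    have "rev (take (k - j - 1) (drop (j + 1) (rev w))) ! i = take (k - j - 1) (drop (j + 1) (rev w)) ! (k - j - 1 - Suc i)"
      using i jk by (simp add: rev_nth)
    also have "\<dots> = rev w ! (j + 1 + (k - j - 1 - Suc i))" using i jk by simp
    also have "\<dots> = w ! (length w - Suc (j + 1 + (k - j - 1 - Suc i)))" using i jk by (simp add: rev_nth)
    also have "length w - Suc (j + 1 + (k - j - 1 - Suc i)) = length w - 1 - k + 1 + i" using i jk by arith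
    also have "w ! (length w - 1 - k + 1 + i) = take (k - j - 1) (drop (length w - 1 - k + 1) w) ! i"
      using i jk by simp
    finally show "rev (take (k - j - 1) (drop (j + 1) (rev w))) ! i = take (k - j - 1) (drop (length w - 1 - k + 1) w) ! i" .
  qed
  have a1: "length w - 1 - j - (length w - 1 - k) - 1 = k - j - 1" using jk by arith
  have a2: "rev w ! j = w ! (length w - 1 - j)" "rev w ! k = w ! (length w - 1 - k)"
    using jk by (simp_all add: rev_nth)
  have "well_matched R C (take (length w - 1 - j - (length w - 1 - k) - 1) (drop (length w - 1 - k + 1) w))"
    using wm_rev[OF inner] e a1 by simp
  moreover have "length w - 1 - k < length w - 1 - j" "length w - 1 - j < length w" using jk by arith+
  moreover have "w ! (length w - 1 - k) \<in> R" "w ! (length w - 1 - j) \<in> C" using jk(3,4) a2 by metis+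
  ultimately show ?thesis unfolding matched_def by blast
qed



definition stp :: "'a set \<Rightarrow> 'a set \<Rightarrow> 'a \<Rightarrow> int" where
  "stp C R a = (if a \<in> C then 1 else if a \<in> R then -1 else 0)"

primrec cut :: "'a set \<Rightarrow> 'a set \<Rightarrow> int \<Rightarrow> 'a list \<Rightarrow> 'a list \<times> 'a list" where
  "cut C R d [] = ([], [])"
| "cut C R d (a # x) = (if d + stp C R a < 0 then ([a], x)
     else (a # fst (cut C R (d + stp C R a) x), snd (cut C R (d + stp C R a) x)))"

lemma cut_app: "fst (cut C R d x) @ snd (cut C R d x) = x"
  by (induction x arbitrary: d) auto

lemma cut_bal:
  "d \<ge> 0 \<Longrightarrow> d + bal C R x < 0 \<Longrightarrow>
   d + bal C R (fst (cut C R d x)) = -1 \<and> (\<forall>m. d + bal C R (take m (fst (cut C R d x))) \<ge> -1)"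
proof (induction x arbitrary: d)
  case Nil then show ?case by simp
next
  case (Cons a x)
  define e :: int where "e = stp C R a"
  have be: "bal C R (a # y) = e + bal C R y" for y unfolding e_def stp_def by simp
  show ?case
  proof (cases "d + e < 0")
    case True
    then have c: "cut C R d (a # x) = ([a], x)" unfolding e_def by simp
    have "d + e = -1" using True Cons.prems(1) unfolding e_def stp_def by (auto split: if_splits)
    moreover have "d + bal C R (take m [a]) \<ge> -1" for m
      using Cons.prems(1) \<open>d + e = -1\<close> by (cases m) (auto simp: be)
    ultimately show ?thesis using c be[of "[]"] by simp
  next
    case False
    then have c: "cut C R d (a # x) = (a # fst (cut C R (d + e) x), snd (cut C R (d + e) x))"
      unfolding e_def by simp
    have IH: "d + e + bal C R (fst (cut C R (d + e) x)) = -1 \<and>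
      (\<forall>m. d + e + bal C R (take m (fst (cut C R (d + e) x))) \<ge> -1)"
      using Cons.IH[of "d + e"] False Cons.prems(2) be[of x] by simp
    have "d + bal C R (take m (a # fst (cut C R (d + e) x))) \<ge> -1" for m
    proof (cases m)
      case 0 then show ?thesis using Cons.prems(1) by simp
    next
      case (Suc k)
      then have "take m (a # fst (cut C R (d + e) x)) = a # take k (fst (cut C R (d + e) x))" by simp
      then show ?thesis using IH[THEN conjunct2, rule_format, of k] be by simp
    qed
    then show ?thesis using IH c be by simp
  qed
qed

lemma bal_filter: "C \<union> R \<subseteq> {a. P a} \<Longrightarrow> bal C R (filter P x) = bal C R x"
  by (induction x) auto

definition exprop :: "'a set \<Rightarrow> 'a set \<Rightarrow> 'a set \<Rightarrow> 'a list \<Rightarrow> bool" where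
  "exprop C R ND \<rho> \<longleftrightarrow> (\<forall>q<length \<rho>. \<rho> ! q \<in> R \<longrightarrow> (\<exists>j'. q < j' \<and> j' < length \<rho> \<and> \<rho> ! j' \<in> ND) \<longrightarrow>
     (\<exists>k'<q. \<rho> ! k' \<in> C \<and> bal C R (take (q - k' - 1) (drop (k' + 1) \<rho>)) = 0 \<and>
        (\<forall>l. k' \<le> l \<and> l \<le> q \<longrightarrow> \<rho> ! l \<notin> ND)))"

lemma take_split3:
  assumes "m1 < m0" "m0 \<le> length g"
  shows "take m0 g = take m1 g @ [g ! m1] @ take (m0 - m1 - 1) (drop (m1 + 1) g)"
proof -
  have "take m0 g = take (m1 + (m0 - m1)) g" using assms by simp
  also have "\<dots> = take m1 g @ take (m0 - m1) (drop m1 g)" by (rule take_add)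
  also have "drop m1 g = g ! m1 # drop (m1 + 1) g" using assms by (simp add: Cons_nth_drop_Suc)
  also have "take (m0 - m1) (g ! m1 # drop (m1 + 1) g) = g ! m1 # take (m0 - m1 - 1) (drop (m1 + 1) g)"
    using assms by (cases "m0 - m1") auto
  finally show ?thesis by simp
qed

lemma gap:
  assumes H1: "\<forall>m. bal C R (take m \<rho>) \<ge> 0"
    and EX: "exprop C R ND \<rho>"
    and dec: "\<rho> = x @ g @ z" "x \<noteq> [] \<longrightarrow> last x \<in> ND" "set g \<inter> ND = {}" "set z \<inter> ND \<noteq> {}"
    and CR: "C \<inter> R = {}"
  shows "bal C R (take m g) \<ge> 0"
proof (induction m rule: less_induct)
  case (less m)
  show ?case
  proof (cases "m \<le> length g")
    case False
    then have "take m g = take (length g) g" by simp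
    then show ?thesis using less[of "length g"] False by simp
  next
    case True
    show ?thesis
    proof (cases m)
      case 0 then show ?thesis by simp
    next
      case (Suc m0)
      have m0: "m0 < length g" using True Suc by simp
      have tm: "take m g = take m0 g @ [g ! m0]" using Suc m0 by (simp add: take_Suc_conv_app_nth)
      have ih0: "bal C R (take m0 g) \<ge> 0" using less[of m0] Suc by simp
      show ?thesis
      proof (rule ccontr)
        assume neg: "\<not> 0 \<le> bal C R (take m g)"
        have gR: "g ! m0 \<in> R" "g ! m0 \<notin> C" and b0: "bal C R (take m0 g) = 0"
        proof -
          have e: "bal C R (take m g) = bal C R (take m0 g) + (if g ! m0 \<in> C then 1 else if g ! m0 \<in> R then -1 else 0)"
            using tm by simp
          show "g ! m0 \<in> R" "g ! m0 \<notin> C" "bal C R (take m0 g) = 0"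
            using e neg ih0 by (cases "g ! m0 \<in> C"; cases "g ! m0 \<in> R"; simp)+
        qed
        show False
        proof (cases "x = []")
          case True
          then have "take m g = take m \<rho>" using dec(1) \<open>m \<le> length g\<close> by simp
          then show False using H1[rule_format, of m] neg by simp
        next
          case False
          define q where "q = length x + m0"
          have rq: "\<rho> ! q = g ! m0" unfolding q_def dec(1) using m0 by (simp add: nth_append)
          obtain t where t: "t < length z" "z ! t \<in> ND" using dec(4) by (auto simp: in_set_conv_nth)
          have ex1: "\<exists>j'. q < j' \<and> j' < length \<rho> \<and> \<rho> ! j' \<in> ND"
            unfolding q_def dec(1) using m0 t
            by (intro exI[of _ "length x + length g + t"]) (auto simp: nth_append)
          have ql: "q < length \<rho>" unfolding q_def dec(1) using m0 by simp
          have rR: "\<rho> ! q \<in> R" using rq gR by simp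
          obtain k' where k': "k' < q" "\<rho> ! k' \<in> C"
            "bal C R (take (q - k' - 1) (drop (k' + 1) \<rho>)) = 0"
            "\<forall>l. k' \<le> l \<and> l \<le> q \<longrightarrow> \<rho> ! l \<notin> ND"
            using EX[unfolded exprop_def, rule_format, OF ql rR ex1] by blast
          show False
          proof (cases "k' < length x")
            case True
            have lx: "\<rho> ! (length x - 1) = last x" unfolding dec(1) using False
              by (simp add: nth_append last_conv_nth)
            have "k' \<le> length x - 1" "length x - 1 \<le> q" using True unfolding q_def by auto
            then have "\<rho> ! (length x - 1) \<notin> ND" using k'(4) by simp
            then show False using lx dec(2) False by simp
          next
            case False
            define m1 where "m1 = k' - length x"
            have m1: "m1 < m0" "k' = length x + m1" using k'(1) False unfolding m1_def q_def by auto
            have gm1: "g ! m1 \<in> C" using k'(2) m1 m0 unfolding dec(1) by (simp add: nth_append)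
            have "drop (k' + 1) \<rho> = drop (m1 + 1) g @ z" unfolding dec(1) using m1 m0 by simp
            moreover have "q - k' - 1 = m0 - m1 - 1" unfolding q_def using m1 by simp
            ultimately have "take (q - k' - 1) (drop (k' + 1) \<rho>) = take (m0 - m1 - 1) (drop (m1 + 1) g)"
              using m1 m0 by simp
            then have bi: "bal C R (take (m0 - m1 - 1) (drop (m1 + 1) g)) = 0" using k'(3) by simp
            have "take m0 g = take m1 g @ [g ! m1] @ take (m0 - m1 - 1) (drop (m1 + 1) g)"
              using take_split3[of m1 m0 g] m1 m0 by simp
            then have "bal C R (take m1 g) = -1" using b0 bi gm1 by simp
            moreover have "bal C R (take m1 g) \<ge> 0" using less[of m1] m1 Suc by simp
            ultimately show False by simp
          qed
        qed
      qed
    qed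
  qed
qed



primrec build :: "('a \<Rightarrow> nat) \<Rightarrow> 'a set \<Rightarrow> (nat \<Rightarrow> 'a list) \<Rightarrow> 'a list \<Rightarrow> 'a list \<times> (nat \<Rightarrow> 'a list)" where
  "build cmp ND B [] = ([], B)"
| "build cmp ND B (a # w) = (if a \<in> ND
      then (B (cmp a) @ [a] @ fst (build cmp ND (B(cmp a := [])) w), snd (build cmp ND (B(cmp a := [])) w))
      else build cmp ND (B(cmp a := B (cmp a) @ [a])) w)"

primrec closing :: "(nat \<Rightarrow> 'a set) \<Rightarrow> (nat \<Rightarrow> 'a set) \<Rightarrow> nat \<Rightarrow> (nat \<Rightarrow> 'a list) \<Rightarrow> nat list \<Rightarrow> 'a list" where
  "closing Cl Rt n Bs [] = concat (map Bs [0..<n])"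
| "closing Cl Rt n Bs (i # L) = fst (cut (Cl i) (Rt i) 0 (Bs i)) @
      closing Cl Rt n (Bs(i := snd (cut (Cl i) (Rt i) 0 (Bs i)))) L"

locale cs =
  fixes n :: nat and Cl Rt sig :: "nat \<Rightarrow> 'a set" and ND :: "'a set" and cmp :: "'a \<Rightarrow> nat"
  assumes sigdisj: "\<And>i j. i < n \<Longrightarrow> j < n \<Longrightarrow> i \<noteq> j \<Longrightarrow> sig i \<inter> sig j = {}"
    and CRsub: "\<And>i. i < n \<Longrightarrow> Cl i \<union> Rt i \<subseteq> sig i"
    and CRdisj: "\<And>i. i < n \<Longrightarrow> Cl i \<inter> Rt i = {}"
    and NDcr: "\<And>i. i < n \<Longrightarrow> ND \<inter> (Cl i \<union> Rt i) = {}"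
    and cmpax: "\<And>i a. i < n \<Longrightarrow> a \<in> sig i \<Longrightarrow> cmp a = i"
begin

abbreviation "CL \<equiv> (\<Union>i<n. Cl i)"
abbreviation "RT \<equiv> (\<Union>i<n. Rt i)"
abbreviation "U \<equiv> (\<Union>i<n. sig i)"

lemma sig_uniq: "i < n \<Longrightarrow> j < n \<Longrightarrow> a \<in> sig i \<Longrightarrow> a \<in> sig j \<Longrightarrow> i = j"
  using sigdisj by blast

lemma inCL: "i < n \<Longrightarrow> a \<in> sig i \<Longrightarrow> (a \<in> CL \<longleftrightarrow> a \<in> Cl i)"
  using CRsub sig_uniq by blast

lemma inRT: "i < n \<Longrightarrow> a \<in> sig i \<Longrightarrow> (a \<in> RT \<longleftrightarrow> a \<in> Rt i)"
  using CRsub sig_uniq by blast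

lemma CLRT: "CL \<inter> RT = {}"
proof -
  have "a \<notin> RT" if aCL: "a \<in> CL" for a
  proof -
    obtain i where i: "i < n" "a \<in> Cl i" using aCL by blast
    then have "a \<in> sig i" using CRsub by blast
    then show ?thesis using inRT[OF i(1)] i CRdisj by blast
  qed
  then show ?thesis by blast
qed

lemma chk_rep:
  assumes "i < n" "set x \<subseteq> sig i" "\<forall>m. int k + bal (Cl i) (Rt i) (take m x) \<ge> 0"
  shows "run CL RT cmp (replicate k i @ S) x = Some (replicate (nat (int k + bal (Cl i) (Rt i) x)) i @ S)"
  using assms(2,3)
proof (induction x arbitrary: k)
  case Nil then show ?case by simp
next
  case (Cons a x)
  have a: "a \<in> sig i" "set x \<subseteq> sig i" using Cons.prems(1) by auto
  have ca: "cmp a = i" using cmpax[OF assms(1) a(1)] .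
  have pre: "int k + bal (Cl i) (Rt i) (a # take m x) \<ge> 0" for m
    using Cons.prems(2)[rule_format, of "Suc m"] by simp
  show ?case
  proof (cases "a \<in> Cl i")
    case True
    have "\<forall>m. int (Suc k) + bal (Cl i) (Rt i) (take m x) \<ge> 0"
    proof
      fix m show "int (Suc k) + bal (Cl i) (Rt i) (take m x) \<ge> 0" using pre[of m] True by simp
    qed
    then have "run CL RT cmp (replicate (Suc k) i @ S) x = Some (replicate (nat (int (Suc k) + bal (Cl i) (Rt i) x)) i @ S)"
      using Cons.IH a by blast
    moreover have "a \<in> CL" using inCL[OF assms(1) a(1)] True by simp
    ultimately show ?thesis using ca True by simp
  next
    case False
    show ?thesis
    proof (cases "a \<in> Rt i")
      case True
      have "int k - 1 \<ge> 0" using pre[of 0] False True by simp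
      then obtain k' where k: "k = Suc k'" by (cases k) auto
      have "\<forall>m. int k' + bal (Cl i) (Rt i) (take m x) \<ge> 0" using pre False True k by simp
      then have "run CL RT cmp (replicate k' i @ S) x = Some (replicate (nat (int k' + bal (Cl i) (Rt i) x)) i @ S)"
        using Cons.IH a by blast
      moreover have "a \<notin> CL" "a \<in> RT" using inCL[OF assms(1) a(1)] inRT[OF assms(1) a(1)] False True by simp_all
      ultimately show ?thesis using ca True False k by simp
    next
      case F2: False
      have "\<forall>m. int k + bal (Cl i) (Rt i) (take m x) \<ge> 0" using pre False F2 by simp
      then have "run CL RT cmp (replicate k i @ S) x = Some (replicate (nat (int k + bal (Cl i) (Rt i) x)) i @ S)"
        using Cons.IH a by blast
      moreover have "a \<notin> CL" "a \<notin> RT" using inCL[OF assms(1) a(1)] inRT[OF assms(1) a(1)] False F2 by simp_all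
      ultimately show ?thesis using False F2 by simp
    qed
  qed
qed

lemma run_count:
  assumes "set x \<subseteq> U" "run CL RT cmp S x = Some S'" "i < n"
  shows "int (count_list S' i) = int (count_list S i) + bal (Cl i) (Rt i) x \<and> (set S \<subseteq> {..<n} \<longrightarrow> set S' \<subseteq> {..<n})"
  using assms(1,2)
proof (induction x arbitrary: S)
  case Nil then show ?case by simp
next
  case (Cons a x)
  obtain j where j: "j < n" "a \<in> sig j" using Cons.prems(1) by auto
  have x: "set x \<subseteq> U" using Cons.prems(1) by simp
  have ca: "cmp a = j" using cmpax j by blast
  have ai: "a \<in> Cl i \<longleftrightarrow> a \<in> Cl j \<and> i = j" "a \<in> Rt i \<longleftrightarrow> a \<in> Rt j \<and> i = j"
    using CRsub[OF assms(3)] sig_uniq[OF assms(3) j(1) _ j(2)] by auto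
  show ?case
  proof (cases "a \<in> Cl j")
    case True
    then have "a \<in> CL" using inCL j by blast
    then have r: "run CL RT cmp (j # S) x = Some S'" using Cons.prems ca by simp
    have "a \<notin> Rt j" using True CRdisj j by blast
    then show ?thesis using Cons.IH[OF x r] ai True j by auto
  next
    case False
    show ?thesis
    proof (cases "a \<in> Rt j")
      case True
      have nc: "a \<notin> CL" "a \<in> RT" using inCL[OF j] inRT[OF j] False True by simp_all
      obtain S0 where S: "S = j # S0" and r: "run CL RT cmp S0 x = Some S'"
        using Cons.prems(2) nc ca by (cases S) (auto split: if_splits)
      show ?thesis using Cons.IH[OF x r] ai True False S j by auto
    next
      case F2: False
      have nc: "a \<notin> CL" "a \<notin> RT" using inCL[OF j] inRT[OF j] False F2 by simp_all
      then have r: "run CL RT cmp S x = Some S'" using Cons.prems by simp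
      show ?thesis using Cons.IH[OF x r] ai False F2 by auto
    qed
  qed
qed

end


context cs begin

lemma build_props:
  assumes "set w \<subseteq> U"
    and "\<forall>i<n. set (B i) \<subseteq> sig i \<and> set (B i) \<inter> ND = {}"
    and "\<forall>i<n. \<exists>\<alpha>. rho i = \<alpha> @ B i @ filter (\<lambda>a. a \<in> sig i) w \<and> (\<alpha> \<noteq> [] \<longrightarrow> last \<alpha> \<in> ND)"
    and EX: "\<forall>i<n. exprop (Cl i) (Rt i) ND (rho i)"
    and H1: "\<forall>i<n. \<forall>m. bal (Cl i) (Rt i) (take m (rho i)) \<ge> 0"
  shows "(\<forall>i<n. filter (\<lambda>a. a \<in> sig i) (fst (build cmp ND B w)) @ snd (build cmp ND B w) i = B i @ filter (\<lambda>a. a \<in> sig i) w) \<and>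
    filter (\<lambda>a. a \<in> ND) (fst (build cmp ND B w)) = filter (\<lambda>a. a \<in> ND) w \<and>
    set (fst (build cmp ND B w)) \<subseteq> U \<and>
    (\<forall>i<n. set (snd (build cmp ND B w) i) \<subseteq> sig i \<and> set (snd (build cmp ND B w) i) \<inter> ND = {}) \<and>
    (\<forall>S. run CL RT cmp S (fst (build cmp ND B w)) \<noteq> None)"
  using assms(1-3)
proof (induction w arbitrary: B)
  case Nil then show ?case by simp
next
  case (Cons a w)
  obtain i where i: "i < n" "a \<in> sig i" using Cons.prems(1) by auto
  have ca: "cmp a = i" using cmpax i by blast
  have w: "set w \<subseteq> U" using Cons.prems(1) by simp
  have fi: "filter (\<lambda>a. a \<in> sig j) (B i) = []" if "j < n" "j \<noteq> i" for j
    using Cons.prems(2) i sigdisj[OF that(1) i(1) that(2)] by (auto simp: filter_empty_conv)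
  have aj: "a \<notin> sig j" if "j < n" "j \<noteq> i" for j using sig_uniq[OF that(1) i(1) _ i(2)] that by blast
  show ?case
  proof (cases "a \<in> ND")
    case True
    define B' where "B' = B(i := [])"
    have bw: "build cmp ND B (a # w) = (B i @ [a] @ fst (build cmp ND B' w), snd (build cmp ND B' w))"
      using True ca unfolding B'_def by simp
    have inv2: "\<forall>j<n. set (B' j) \<subseteq> sig j \<and> set (B' j) \<inter> ND = {}" using Cons.prems(2) unfolding B'_def by auto
    have inv3: "\<forall>j<n. \<exists>\<alpha>. rho j = \<alpha> @ B' j @ filter (\<lambda>a. a \<in> sig j) w \<and> (\<alpha> \<noteq> [] \<longrightarrow> last \<alpha> \<in> ND)"
    proof (intro allI impI)
      fix j assume j: "j < n"
      obtain \<alpha> where al: "rho j = \<alpha> @ B j @ filter (\<lambda>a. a \<in> sig j) (a # w)" "\<alpha> \<noteq> [] \<longrightarrow> last \<alpha> \<in> ND"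
        using Cons.prems(3) j by blast
      show "\<exists>\<alpha>. rho j = \<alpha> @ B' j @ filter (\<lambda>a. a \<in> sig j) w \<and> (\<alpha> \<noteq> [] \<longrightarrow> last \<alpha> \<in> ND)"
      proof (cases "j = i")
        case True
        then show ?thesis using al i True \<open>a \<in> ND\<close> unfolding B'_def
          by (intro exI[of _ "\<alpha> @ B i @ [a]"]) simp
      next
        case False
        then show ?thesis using al aj[OF j False] unfolding B'_def by auto
      qed
    qed
    note IH = Cons.IH[OF w inv2 inv3]
    have B'i: "B' i = []" "\<And>j. j \<noteq> i \<Longrightarrow> B' j = B j" unfolding B'_def by simp_all
    have p1: "filter (\<lambda>a. a \<in> sig j) (fst (build cmp ND B (a # w))) @ snd (build cmp ND B (a # w)) j
       = B j @ filter (\<lambda>a. a \<in> sig j) (a # w)" if j: "j < n" for j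
    proof (cases "j = i")
      case True
      have fb: "filter (\<lambda>a. a \<in> sig i) (B i) = B i" using Cons.prems(2) i by (auto simp: filter_id_conv)
      show ?thesis using IH[THEN conjunct1, rule_format, OF j] True i bw fb B'i(1) by simp
    next
      case False
      then show ?thesis using IH[THEN conjunct1, rule_format, OF j] bw fi[OF j False] aj[OF j False] B'i(2)[OF False] by simp
    qed
    have bnd: "filter (\<lambda>a. a \<in> ND) (B i) = []" using Cons.prems(2) i by (auto simp: filter_empty_conv)
    have p2: "filter (\<lambda>a. a \<in> ND) (fst (build cmp ND B (a # w))) = filter (\<lambda>a. a \<in> ND) (a # w)"
      using IH bw bnd True by simp
    have p3: "set (fst (build cmp ND B (a # w))) \<subseteq> U" using IH bw Cons.prems(1,2) i by auto
    have p4: "\<forall>j<n. set (snd (build cmp ND B (a # w)) j) \<subseteq> sig j \<and> set (snd (build cmp ND B (a # w)) j) \<inter> ND = {}"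
      using IH bw by simp
    have p5: "run CL RT cmp S (fst (build cmp ND B (a # w))) \<noteq> None" for S
    proof -
      obtain \<alpha> where al: "rho i = \<alpha> @ B i @ filter (\<lambda>a. a \<in> sig i) (a # w)" "\<alpha> \<noteq> [] \<longrightarrow> last \<alpha> \<in> ND"
        using Cons.prems(3) i by blast
      have "bal (Cl i) (Rt i) (take m (B i)) \<ge> 0" for m
      proof (rule gap)
        show "\<forall>m. bal (Cl i) (Rt i) (take m (rho i)) \<ge> 0" using H1 i by blast
        show "exprop (Cl i) (Rt i) ND (rho i)" using EX i by blast
        show "rho i = \<alpha> @ B i @ filter (\<lambda>a. a \<in> sig i) (a # w)" by (rule al(1))
        show "\<alpha> \<noteq> [] \<longrightarrow> last \<alpha> \<in> ND" by (rule al(2))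
        show "set (B i) \<inter> ND = {}" using Cons.prems(2) i by blast
        show "set (filter (\<lambda>a. a \<in> sig i) (a # w)) \<inter> ND \<noteq> {}" using i True by auto
        show "Cl i \<inter> Rt i = {}" using CRdisj i by blast
      qed
      then have r1: "run CL RT cmp (replicate 0 i @ S) (B i) = Some (replicate (nat (int 0 + bal (Cl i) (Rt i) (B i))) i @ S)"
        using chk_rep[OF i(1), of "B i" 0 S] Cons.prems(2) i by simp
      have anc: "a \<notin> CL" "a \<notin> RT" using inCL[OF i] inRT[OF i] NDcr[OF i(1)] True by auto
      show ?thesis using r1 anc IH bw by (simp add: run_append)
    qed
    show ?thesis using p1 p2 p3 p4 p5 by blast
  next
    case False
    define B' where "B' = B(i := B i @ [a])"
    have bw: "build cmp ND B (a # w) = build cmp ND B' w"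
      using False ca unfolding B'_def by simp
    have inv2: "\<forall>j<n. set (B' j) \<subseteq> sig j \<and> set (B' j) \<inter> ND = {}" using Cons.prems(2) i False unfolding B'_def by auto
    have inv3: "\<forall>j<n. \<exists>\<alpha>. rho j = \<alpha> @ B' j @ filter (\<lambda>a. a \<in> sig j) w \<and> (\<alpha> \<noteq> [] \<longrightarrow> last \<alpha> \<in> ND)"
    proof (intro allI impI)
      fix j assume j: "j < n"
      obtain \<alpha> where al: "rho j = \<alpha> @ B j @ filter (\<lambda>a. a \<in> sig j) (a # w)" "\<alpha> \<noteq> [] \<longrightarrow> last \<alpha> \<in> ND"
        using Cons.prems(3) j by blast
      show "\<exists>\<alpha>. rho j = \<alpha> @ B' j @ filter (\<lambda>a. a \<in> sig j) w \<and> (\<alpha> \<noteq> [] \<longrightarrow> last \<alpha> \<in> ND)"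
      proof (cases "j = i")
        case True
        then show ?thesis using al i unfolding B'_def by (intro exI[of _ \<alpha>]) simp
      next
        case False
        then show ?thesis using al aj[OF j False] unfolding B'_def by auto
      qed
    qed
    note IH = Cons.IH[OF w inv2 inv3]
    have B'i: "B' i = B i @ [a]" "\<And>j. j \<noteq> i \<Longrightarrow> B' j = B j" unfolding B'_def by simp_all
    have p1: "filter (\<lambda>a. a \<in> sig j) (fst (build cmp ND B (a # w))) @ snd (build cmp ND B (a # w)) j
       = B j @ filter (\<lambda>a. a \<in> sig j) (a # w)" if j: "j < n" for j
    proof (cases "j = i")
      case True
      show ?thesis using IH[THEN conjunct1, rule_format, OF j] True i bw B'i(1) by simp
    next
      case False
      then show ?thesis using IH[THEN conjunct1, rule_format, OF j] bw aj[OF j False] B'i(2)[OF False] by simp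
    qed
    show ?thesis using p1 IH bw False by simp
  qed
qed

end


context cs begin

lemma concat_filter:
  assumes "\<forall>k<n. set (Bs k) \<subseteq> sig k" "m \<le> n" "j < n"
  shows "filter (\<lambda>a. a \<in> sig j) (concat (map Bs [0..<m])) = (if j < m then Bs j else [])"
  using assms(2)
proof (induction m)
  case 0 then show ?case by simp
next
  case (Suc m)
  have f: "filter (\<lambda>a. a \<in> sig j) (Bs m) = (if j = m then Bs m else [])"
  proof (cases "j = m")
    case True
    have "m < n" using Suc.prems by simp
    then have "set (Bs m) \<subseteq> sig m" using assms(1) by blast
    then show ?thesis using True by (auto simp: filter_id_conv)
  next
    case False
    then have "sig j \<inter> sig m = {}" using sigdisj assms(3) Suc.prems by simp
    moreover have "set (Bs m) \<subseteq> sig m" using assms(1) Suc.prems by simp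
    ultimately show ?thesis using False by (auto simp: filter_empty_conv)
  qed
  show ?case using Suc.IH Suc.prems f by auto
qed

lemma closing_props:
  assumes "set L \<subseteq> {..<n}" "\<forall>i<n. set (Bs i) \<subseteq> sig i \<and> set (Bs i) \<inter> ND = {}"
  shows "(\<forall>j<n. filter (\<lambda>a. a \<in> sig j) (closing Cl Rt n Bs L) = Bs j) \<and>
    filter (\<lambda>a. a \<in> ND) (closing Cl Rt n Bs L) = [] \<and> set (closing Cl Rt n Bs L) \<subseteq> U"
  using assms
proof (induction L arbitrary: Bs)
  case Nil
  have "\<forall>j<n. filter (\<lambda>a. a \<in> sig j) (concat (map Bs [0..<n])) = Bs j"
    using concat_filter[of Bs n] Nil.prems(2) by simp
  moreover have "filter (\<lambda>a. a \<in> ND) (concat (map Bs [0..<n])) = []"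
    using Nil.prems(2) by (auto simp: filter_empty_conv)
  moreover have "set (concat (map Bs [0..<n])) \<subseteq> U" using Nil.prems(2) by fastforce
  ultimately show ?case by simp
next
  case (Cons i L)
  have i: "i < n" using Cons.prems(1) by simp
  define p where "p = fst (cut (Cl i) (Rt i) 0 (Bs i))"
  define q where "q = snd (cut (Cl i) (Rt i) 0 (Bs i))"
  have pq: "p @ q = Bs i" unfolding p_def q_def by (rule cut_app)
  define Bs' where "Bs' = Bs(i := q)"
  have c: "closing Cl Rt n Bs (i # L) = p @ closing Cl Rt n Bs' L" unfolding p_def q_def Bs'_def by simp
  have sq: "set q \<subseteq> set (Bs i)" using pq by (metis Un_upper2 set_append)
  have inv: "\<forall>j<n. set (Bs' j) \<subseteq> sig j \<and> set (Bs' j) \<inter> ND = {}"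
  proof (intro allI impI)
    fix j assume j: "j < n"
    show "set (Bs' j) \<subseteq> sig j \<and> set (Bs' j) \<inter> ND = {}"
    proof (cases "j = i")
      case True
      have "set (Bs i) \<subseteq> sig i \<and> set (Bs i) \<inter> ND = {}" using Cons.prems(2) i by blast
      then show ?thesis using True sq unfolding Bs'_def by auto
    next
      case False
      then show ?thesis using Cons.prems(2) j unfolding Bs'_def by simp
    qed
  qed
  have IH': "(\<forall>j<n. filter (\<lambda>a. a \<in> sig j) (closing Cl Rt n Bs' L) = Bs' j) \<and>
    filter (\<lambda>a. a \<in> ND) (closing Cl Rt n Bs' L) = [] \<and> set (closing Cl Rt n Bs' L) \<subseteq> U"
    using Cons.IH[of Bs'] Cons.prems(1) inv by simp
  have bsi: "set (Bs i) \<subseteq> sig i \<and> set (Bs i) \<inter> ND = {}" using Cons.prems(2) i by blast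
  have psig: "set p \<subseteq> sig i" "set p \<inter> ND = {}" using bsi unfolding pq[symmetric] by auto
  have "filter (\<lambda>a. a \<in> sig j) (p @ closing Cl Rt n Bs' L) = Bs j" if j: "j < n" for j
  proof (cases "j = i")
    case True
    then show ?thesis using IH' j psig pq unfolding Bs'_def by (simp add: filter_id_conv subset_iff)
  next
    case False
    then have "sig j \<inter> sig i = {}" using sigdisj j i by simp
    then have "filter (\<lambda>a. a \<in> sig j) p = []" using psig by (auto simp: filter_empty_conv)
    then show ?thesis using IH' j False unfolding Bs'_def by simp
  qed
  moreover have "filter (\<lambda>a. a \<in> ND) (p @ closing Cl Rt n Bs' L) = []"
    using IH' psig by (auto simp: filter_empty_conv)
  moreover have "set (p @ closing Cl Rt n Bs' L) \<subseteq> U" using IH' psig i by auto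
  ultimately show ?case using c by simp
qed

lemma run_concat:
  assumes "\<forall>i<n. set (Bs i) \<subseteq> sig i" "\<forall>i<n. \<forall>m. bal (Cl i) (Rt i) (take m (Bs i)) \<ge> 0"
    "\<forall>i<n. bal (Cl i) (Rt i) (Bs i) = 0" "m \<le> n"
  shows "run CL RT cmp [] (concat (map Bs [0..<m])) = Some []"
  using assms(4)
proof (induction m)
  case 0 then show ?case by simp
next
  case (Suc m)
  have m: "m < n" using Suc.prems by simp
  have "run CL RT cmp (replicate 0 m @ []) (Bs m) = Some (replicate (nat (int 0 + bal (Cl m) (Rt m) (Bs m))) m @ [])"
    using chk_rep[OF m, of "Bs m" 0 "[]"] assms(1,2) m by simp
  then have "run CL RT cmp [] (Bs m) = Some []" using assms(3) m by simp
  then show ?case using Suc by (simp add: run_append)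
qed

lemma closing_run:
  assumes "set L \<subseteq> {..<n}" "\<forall>i<n. set (Bs i) \<subseteq> sig i"
    "\<forall>i<n. \<forall>m. int (count_list L i) + bal (Cl i) (Rt i) (take m (Bs i)) \<ge> 0"
    "\<forall>i<n. int (count_list L i) + bal (Cl i) (Rt i) (Bs i) = 0"
  shows "run CL RT cmp L (closing Cl Rt n Bs L) = Some []"
  using assms
proof (induction L arbitrary: Bs)
  case Nil
  then show ?case using run_concat[of Bs n] by simp
next
  case (Cons i L)
  have i: "i < n" using Cons.prems(1) by simp
  define p where "p = fst (cut (Cl i) (Rt i) 0 (Bs i))"
  define q where "q = snd (cut (Cl i) (Rt i) 0 (Bs i))"
  have pq: "p @ q = Bs i" unfolding p_def q_def by (rule cut_app)
  define Bs' where "Bs' = Bs(i := q)"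
  have c: "closing Cl Rt n Bs (i # L) = p @ closing Cl Rt n Bs' L" unfolding p_def q_def Bs'_def by simp
  have tot: "int (count_list L i) + 1 + bal (Cl i) (Rt i) (Bs i) = 0" using Cons.prems(4)[rule_format, OF i] by simp
  have "0 + bal (Cl i) (Rt i) (Bs i) < 0" using tot by simp
  from cut_bal[OF _ this] have pb: "bal (Cl i) (Rt i) p = -1" "\<forall>m. bal (Cl i) (Rt i) (take m p) \<ge> -1"
    unfolding p_def by simp_all
  have bsi: "set (Bs i) \<subseteq> sig i" using Cons.prems(2) i by blast
  have psig: "set p \<subseteq> sig i" "set q \<subseteq> sig i" using bsi unfolding pq[symmetric] by auto
  have "\<forall>m. int 1 + bal (Cl i) (Rt i) (take m p) \<ge> 0"
  proof
    fix m show "int 1 + bal (Cl i) (Rt i) (take m p) \<ge> 0" using pb(2)[rule_format, of m] by simp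
  qed
  from chk_rep[OF i psig(1) this, of L] pb
  have r1: "run CL RT cmp (i # L) p = Some L" by simp
  have inv2: "\<forall>j<n. set (Bs' j) \<subseteq> sig j" using Cons.prems(2) psig unfolding Bs'_def by simp
  have inv3: "\<forall>j<n. \<forall>m. int (count_list L j) + bal (Cl j) (Rt j) (take m (Bs' j)) \<ge> 0"
  proof (intro allI impI)
    fix j m assume j: "j < n"
    show "int (count_list L j) + bal (Cl j) (Rt j) (take m (Bs' j)) \<ge> 0"
    proof (cases "j = i")
      case True
      have "take (length p + m) (Bs i) = p @ take m q" using pq[symmetric] by simp
      then have "int (count_list (i # L) i) + (bal (Cl i) (Rt i) p + bal (Cl i) (Rt i) (take m q)) \<ge> 0"
        using Cons.prems(3)[rule_format, OF i, of "length p + m"] by simp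
      then show ?thesis using True pb unfolding Bs'_def by simp
    next
      case False
      then show ?thesis using Cons.prems(3)[rule_format, OF j, of m] unfolding Bs'_def by simp
    qed
  qed
  have inv4: "\<forall>j<n. int (count_list L j) + bal (Cl j) (Rt j) (Bs' j) = 0"
  proof (intro allI impI)
    fix j assume j: "j < n"
    show "int (count_list L j) + bal (Cl j) (Rt j) (Bs' j) = 0"
    proof (cases "j = i")
      case True
      have "bal (Cl i) (Rt i) (Bs i) = bal (Cl i) (Rt i) p + bal (Cl i) (Rt i) q" using pq by (metis bal_append)
      then show ?thesis using True tot pb unfolding Bs'_def by simp
    next
      case False
      then show ?thesis using Cons.prems(4)[rule_format, OF j] unfolding Bs'_def by simp
    qed
  qed
  have "run CL RT cmp L (closing Cl Rt n Bs' L) = Some []"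
    using Cons.IH[of Bs'] Cons.prems(1) inv2 inv3 inv4 by simp
  then show ?case using c r1 by (simp add: run_append)
qed

end


context cs begin

lemma core:
  assumes w: "set w \<subseteq> U"
    and H1: "\<forall>i<n. \<forall>m. bal (Cl i) (Rt i) (take m (filter (\<lambda>a. a \<in> sig i) w)) \<ge> 0"
    and H2: "\<forall>i<n. bal (Cl i) (Rt i) (filter (\<lambda>a. a \<in> sig i) w) = 0"
    and EX: "\<forall>i<n. exprop (Cl i) (Rt i) ND (filter (\<lambda>a. a \<in> sig i) w)"
  shows "\<exists>w'. (\<forall>i<n. filter (\<lambda>a. a \<in> sig i) w' = filter (\<lambda>a. a \<in> sig i) w) \<and>
     filter (\<lambda>a. a \<in> ND) w' = filter (\<lambda>a. a \<in> ND) w \<and> set w' \<subseteq> U \<and> run CL RT cmp [] w' \<noteq> None"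
proof -
  define rho where "rho i = filter (\<lambda>a. a \<in> sig i) w" for i
  have i2: "\<forall>i<n. set ((\<lambda>_. []) i) \<subseteq> sig i \<and> set ((\<lambda>_::nat. [] :: 'a list) i) \<inter> ND = {}" by simp
  have i3: "\<forall>i<n. \<exists>\<alpha>. rho i = \<alpha> @ (\<lambda>_. []) i @ filter (\<lambda>a. a \<in> sig i) w \<and> (\<alpha> \<noteq> [] \<longrightarrow> last \<alpha> \<in> ND)"
    unfolding rho_def by simp
  have bp: "(\<forall>i<n. filter (\<lambda>a. a \<in> sig i) (fst (build cmp ND (\<lambda>_. []) w)) @ snd (build cmp ND (\<lambda>_. []) w) i = [] @ filter (\<lambda>a. a \<in> sig i) w) \<and>
    filter (\<lambda>a. a \<in> ND) (fst (build cmp ND (\<lambda>_. []) w)) = filter (\<lambda>a. a \<in> ND) w \<and>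
    set (fst (build cmp ND (\<lambda>_. []) w)) \<subseteq> U \<and>
    (\<forall>i<n. set (snd (build cmp ND (\<lambda>_. []) w) i) \<subseteq> sig i \<and> set (snd (build cmp ND (\<lambda>_. []) w) i) \<inter> ND = {}) \<and>
    (\<forall>S. run CL RT cmp S (fst (build cmp ND (\<lambda>_. []) w)) \<noteq> None)"
  proof -
    have e: "\<forall>i<n. exprop (Cl i) (Rt i) ND (rho i)" using EX unfolding rho_def by simp
    have h: "\<forall>i<n. \<forall>m. bal (Cl i) (Rt i) (take m (rho i)) \<ge> 0" using H1 unfolding rho_def by simp
    show ?thesis using build_props[OF w i2 i3 e h] by simp
  qed
  define X where "X = fst (build cmp ND (\<lambda>_. []) w)"
  define B' where "B' = snd (build cmp ND (\<lambda>_. []) w)"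
  have X1: "\<forall>i<n. filter (\<lambda>a. a \<in> sig i) X @ B' i = rho i" using bp unfolding X_def B'_def rho_def by simp
  have X2: "filter (\<lambda>a. a \<in> ND) X = filter (\<lambda>a. a \<in> ND) w" using bp unfolding X_def by simp
  have X3: "set X \<subseteq> U" using bp unfolding X_def by simp
  have X4: "\<forall>i<n. set (B' i) \<subseteq> sig i \<and> set (B' i) \<inter> ND = {}" using bp unfolding B'_def by simp
  obtain L where L: "run CL RT cmp [] X = Some L" using bp unfolding X_def by blast
  have Lset: "set L \<subseteq> {..<n}"
  proof (cases "n = 0")
    case True
    then have "X = []" using X3 by auto
    then show ?thesis using L by simp
  next
    case False
    then show ?thesis using run_count[OF X3 L, of 0] by simp
  qed
  have cnt: "int (count_list L i) = bal (Cl i) (Rt i) (filter (\<lambda>a. a \<in> sig i) X)" if i: "i < n" for i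
    using run_count[OF X3 L i] bal_filter[of "Cl i" "Rt i" "\<lambda>a. a \<in> sig i" X] CRsub[OF i] by simp
  have c3: "\<forall>i<n. \<forall>m. int (count_list L i) + bal (Cl i) (Rt i) (take m (B' i)) \<ge> 0"
  proof (intro allI impI)
    fix i m assume i: "i < n"
    have "take (length (filter (\<lambda>a. a \<in> sig i) X) + m) (rho i) = filter (\<lambda>a. a \<in> sig i) X @ take m (B' i)"
    proof -
      have "rho i = filter (\<lambda>a. a \<in> sig i) X @ B' i" using X1 i by simp
      then show ?thesis by simp
    qed
    then have "bal (Cl i) (Rt i) (filter (\<lambda>a. a \<in> sig i) X) + bal (Cl i) (Rt i) (take m (B' i)) \<ge> 0"
      using H1[rule_format, OF i, of "length (filter (\<lambda>a. a \<in> sig i) X) + m"] unfolding rho_def by simp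
    then show "int (count_list L i) + bal (Cl i) (Rt i) (take m (B' i)) \<ge> 0" using cnt[OF i] by simp
  qed
  have c4: "\<forall>i<n. int (count_list L i) + bal (Cl i) (Rt i) (B' i) = 0"
  proof (intro allI impI)
    fix i assume i: "i < n"
    have "bal (Cl i) (Rt i) (filter (\<lambda>a. a \<in> sig i) X) + bal (Cl i) (Rt i) (B' i) = 0"
      using H2[rule_format, OF i] X1[rule_format, OF i] unfolding rho_def by (metis bal_append)
    then show "int (count_list L i) + bal (Cl i) (Rt i) (B' i) = 0" using cnt[OF i] by simp
  qed
  have rc: "run CL RT cmp L (closing Cl Rt n B' L) = Some []"
    using closing_run[OF Lset _ c3 c4] X4 by simp
  have cp: "(\<forall>j<n. filter (\<lambda>a. a \<in> sig j) (closing Cl Rt n B' L) = B' j) \<and>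
    filter (\<lambda>a. a \<in> ND) (closing Cl Rt n B' L) = [] \<and> set (closing Cl Rt n B' L) \<subseteq> U"
    using closing_props[OF Lset X4] .
  define w' where "w' = X @ closing Cl Rt n B' L"
  have "\<forall>i<n. filter (\<lambda>a. a \<in> sig i) w' = filter (\<lambda>a. a \<in> sig i) w"
    using X1 cp unfolding w'_def rho_def by simp
  moreover have "filter (\<lambda>a. a \<in> ND) w' = filter (\<lambda>a. a \<in> ND) w" using X2 cp unfolding w'_def by simp
  moreover have "set w' \<subseteq> U" using X3 cp unfolding w'_def by simp
  moreover have "run CL RT cmp [] w' \<noteq> None" using L rc unfolding w'_def by (simp add: run_append)
  ultimately show ?thesis by blast
qed

end


context cs begin
lemma same_comp:
  assumes "set x \<subseteq> U" "j < length x" "k < length x" "cmp (x ! j) = cmp (x ! k)"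
  shows "\<exists>i<n. x ! j \<in> sig i \<and> x ! k \<in> sig i"
proof -
  obtain i where i: "i < n" "x ! j \<in> sig i" using assms(1,2) nth_mem by blast
  obtain i' where i': "i' < n" "x ! k \<in> sig i'" using assms(1,3) nth_mem by blast
  have "i = i'" using cmpax[OF i] cmpax[OF i'] assms(4) by simp
  then show ?thesis using i i' by blast
qed
end

definition NDs :: "nat \<Rightarrow> (nat \<Rightarrow> 'a set) \<Rightarrow> (nat \<Rightarrow> 'a set) \<Rightarrow> (nat \<Rightarrow> 'a set) \<Rightarrow> ('a \<Rightarrow> ('c \<times> 'c) set) \<Rightarrow> 'a set" where
  "NDs n Cl Rt It M = {a. \<exists>i<n. a \<in> sigma Cl Rt It i \<and> a \<notin> indep n Cl Rt It M i}"

definition cmpf :: "nat \<Rightarrow> (nat \<Rightarrow> 'a set) \<Rightarrow> 'a \<Rightarrow> nat" where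
  "cmpf n sg a = (THE i. i < n \<and> a \<in> sg i)"

lemma key:
  fixes n :: nat
    and Cl Rt It :: "nat \<Rightarrow> 'a set"
    and P :: "nat \<Rightarrow> 'a list set"
    and M :: "'a \<Rightarrow> ('c \<times> 'c) set"
  assumes vp: "\<forall>i<n. vp_alphabet (Cl i) (Rt i) (It i)"
    and disj: "\<forall>i<n. \<forall>j<n. i \<noteq> j \<longrightarrow> sigma Cl Rt It i \<inter> sigma Cl Rt It j = {}"
    and wm: "\<forall>i<n. \<forall>\<rho> \<in> P i. well_matched (Cl i) (Rt i) \<rho>"
    and cr_indep: "\<forall>i<n. Cl i \<union> Rt i \<subseteq> indep n Cl Rt It M i"
    and ind: "(\<forall>i<n. tail_independent n Cl Rt It M P i) \<or>
              (\<forall>i<n. head_independent n Cl Rt It M P i)"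
    and w: "w \<in> shuffle n Cl Rt It P"
  shows "\<exists>w'. (\<forall>i<n. filter (\<lambda>a. a \<in> sigma Cl Rt It i) w' = filter (\<lambda>a. a \<in> sigma Cl Rt It i) w) \<and>
    filter (\<lambda>a. a \<in> NDs n Cl Rt It M) w' = filter (\<lambda>a. a \<in> NDs n Cl Rt It M) w \<and>
    set w' \<subseteq> (\<Union>i<n. sigma Cl Rt It i) \<and> well_nested n Cl Rt It w'"
proof -
  define sig where "sig = sigma Cl Rt It"
  define ND where "ND = NDs n Cl Rt It M"
  define cmp where "cmp = cmpf n sig"
  have sigdisj: "\<And>i j. i < n \<Longrightarrow> j < n \<Longrightarrow> i \<noteq> j \<Longrightarrow> sig i \<inter> sig j = {}" using disj unfolding sig_def by blast
  have CRsub: "\<And>i. i < n \<Longrightarrow> Cl i \<union> Rt i \<subseteq> sig i" unfolding sig_def sigma_def by blast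
  have CRdisj: "\<And>i. i < n \<Longrightarrow> Cl i \<inter> Rt i = {}" using vp unfolding vp_alphabet_def by blast
  have indsub: "\<And>i. indep n Cl Rt It M i \<subseteq> sig i" unfolding indep_def sig_def by blast
  have NDiff: "a \<in> ND \<longleftrightarrow> a \<notin> indep n Cl Rt It M i" if "i < n" "a \<in> sig i" for i a
  proof
    assume "a \<in> ND"
    then obtain j where j: "j < n" "a \<in> sig j" "a \<notin> indep n Cl Rt It M j" unfolding ND_def NDs_def sig_def by blast
    then have "j = i" using sigdisj that by blast
    then show "a \<notin> indep n Cl Rt It M i" using j by simp
  next
    assume "a \<notin> indep n Cl Rt It M i"
    then show "a \<in> ND" using that unfolding ND_def NDs_def sig_def by blast
  qed
  have NDcr: "ND \<inter> (Cl i \<union> Rt i) = {}" if i: "i < n" for i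
  proof -
    have "a \<notin> ND" if a: "a \<in> Cl i \<union> Rt i" for a
    proof -
      have "a \<in> sig i" using CRsub[OF i] a by blast
      moreover have "a \<in> indep n Cl Rt It M i" using cr_indep i a by blast
      ultimately show ?thesis using NDiff[OF i] by blast
    qed
    then show ?thesis by blast
  qed
  have cmpax: "\<And>i a. i < n \<Longrightarrow> a \<in> sig i \<Longrightarrow> cmp a = i"
  proof -
    fix i a assume ia: "i < n" "a \<in> sig i"
    show "cmp a = i" unfolding cmp_def cmpf_def
    proof (rule the_equality)
      show "i < n \<and> a \<in> sig i" using ia by simp
      fix j assume "j < n \<and> a \<in> sig j"
      then show "j = i" using sigdisj ia by blast
    qed
  qed
  interpret A: cs n Cl Rt sig ND cmp
    by unfold_locales (fact sigdisj CRsub CRdisj NDcr cmpax)+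
  interpret B: cs n Rt Cl sig ND cmp
  proof
    fix i j assume "i < n" "j < n" "i \<noteq> j" then show "sig i \<inter> sig j = {}" by (rule sigdisj)
  next
    fix i assume i: "i < n"
    show "Rt i \<union> Cl i \<subseteq> sig i" using CRsub[OF i] by (simp add: Un_commute)
    show "Rt i \<inter> Cl i = {}" using CRdisj[OF i] by (simp add: Int_commute)
    show "ND \<inter> (Rt i \<union> Cl i) = {}" using NDcr[OF i] by (simp add: Un_commute)
  next
    fix i a assume "i < n" "a \<in> sig i" then show "cmp a = i" by (rule cmpax)
  qed
  have wU: "set w \<subseteq> (\<Union>i<n. sig i)" and wP: "\<forall>i<n. filter (\<lambda>a. a \<in> sig i) w \<in> P i"
    using w unfolding shuffle_def sig_def by auto
  define rho where "rho i = filter (\<lambda>a. a \<in> sig i) w" for i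
  have rsig: "set (rho i) \<subseteq> sig i" for i unfolding rho_def by auto
  have rwm: "bal (Cl i) (Rt i) (rho i) = 0 \<and> (\<forall>m. bal (Cl i) (Rt i) (take m (rho i)) \<ge> 0)" if i: "i < n" for i
  proof -
    have "rho i \<in> P i" using wP i unfolding rho_def by blast
    then have "well_matched (Cl i) (Rt i) (rho i)" using wm i by blast
    then show ?thesis using wm_bal CRdisj[OF i] by blast
  qed
  have notND: "rho i ! l \<notin> ND" if "i < n" "l < length (rho i)" "rho i ! l \<in> indep n Cl Rt It M i" for i l
  proof -
    have "rho i ! l \<in> set (rho i)" using that(2) by (rule nth_mem)
    then have "rho i ! l \<in> sig i" using rsig by blast
    then show ?thesis using NDiff[OF that(1)] that(3) by blast
  qed
  show ?thesis
  proof (cases "\<forall>i<n. tail_independent n Cl Rt It M P i")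
    case True
    have EX: "exprop (Cl i) (Rt i) ND (rho i)" if i: "i < n" for i
    proof -
      have rP: "rho i \<in> P i" using wP i unfolding rho_def by blast
      have ti: "tail_independent n Cl Rt It M P i" using True i by blast
      obtain u v where uv: "rho i = u @ v" "set v \<subseteq> indep n Cl Rt It M i" "indep_split n Cl Rt It M i u v"
        using ti[unfolded tail_independent_def, rule_format, OF rP] by blast
      have isp: "\<forall>j<length (rho i). ((rho i ! j \<in> Cl i \<and> length u \<le> j) \<or> (rho i ! j \<in> Rt i \<and> j < length u)) \<longrightarrow>
        (\<exists>k. (matched (Cl i) (Rt i) (rho i) j k \<or> matched (Cl i) (Rt i) (rho i) k j) \<and>
             (\<forall>l. min j k \<le> l \<and> l \<le> max j k \<longrightarrow> rho i ! l \<in> indep n Cl Rt It M i))"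
        using uv(3) unfolding indep_split_def Let_def uv(1)[symmetric] .
      show ?thesis unfolding exprop_def
      proof (intro allI impI)
        fix q assume q: "q < length (rho i)" "rho i ! q \<in> Rt i"
          and "\<exists>j'. q < j' \<and> j' < length (rho i) \<and> rho i ! j' \<in> ND"
        then obtain j' where j': "q < j'" "j' < length (rho i)" "rho i ! j' \<in> ND" by blast
        have "j' < length u"
        proof (rule ccontr)
          assume "\<not> j' < length u"
          then have "rho i ! j' \<in> set v" using j'(2) uv(1) by (simp add: nth_append)
          then show False using notND[OF i j'(2)] j'(3) uv(2) by blast
        qed
        then have qu: "q < length u" using j' by simp
        obtain k where k: "matched (Cl i) (Rt i) (rho i) q k \<or> matched (Cl i) (Rt i) (rho i) k q"
          "\<forall>l. min q k \<le> l \<and> l \<le> max q k \<longrightarrow> rho i ! l \<in> indep n Cl Rt It M i"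
          using isp[rule_format, OF q(1)] q(2) qu by blast
        have "\<not> matched (Cl i) (Rt i) (rho i) q k" using q(2) CRdisj[OF i] unfolding matched_def by blast
        then have m: "matched (Cl i) (Rt i) (rho i) k q" using k(1) by blast
        then have kq: "k < q" "rho i ! k \<in> Cl i" "well_matched (Cl i) (Rt i) (take (q - k - 1) (drop (k + 1) (rho i)))"
          unfolding matched_def by auto
        have "bal (Cl i) (Rt i) (take (q - k - 1) (drop (k + 1) (rho i))) = 0"
          using wm_bal[OF kq(3) CRdisj[OF i]] by blast
        moreover have "\<forall>l. k \<le> l \<and> l \<le> q \<longrightarrow> rho i ! l \<notin> ND"
          using k(2) kq(1) notND[OF i] q(1) by fastforce
        ultimately show "\<exists>k'<q. rho i ! k' \<in> Cl i \<and> bal (Cl i) (Rt i) (take (q - k' - 1) (drop (k' + 1) (rho i))) = 0 \<and>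
          (\<forall>l. k' \<le> l \<and> l \<le> q \<longrightarrow> rho i ! l \<notin> ND)" using kq by blast
      qed
    qed
    obtain w' where w': "\<forall>i<n. filter (\<lambda>a. a \<in> sig i) w' = filter (\<lambda>a. a \<in> sig i) w"
      "filter (\<lambda>a. a \<in> ND) w' = filter (\<lambda>a. a \<in> ND) w" "set w' \<subseteq> (\<Union>i<n. sig i)"
      "run (\<Union>i<n. Cl i) (\<Union>i<n. Rt i) cmp [] w' \<noteq> None"
      using A.core[OF wU] rwm EX unfolding rho_def by blast
    have "well_nested n Cl Rt It w'" unfolding well_nested_def
    proof (intro allI impI)
      fix j k assume m: "matched (\<Union>i<n. Cl i) (\<Union>i<n. Rt i) w' j k"
      have "cmp (w' ! j) = cmp (w' ! k)" using run_nested[OF A.CLRT w'(4) m] .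
      moreover have "j < length w'" "k < length w'" using m unfolding matched_def by auto
      ultimately show "\<exists>i<n. w' ! j \<in> sigma Cl Rt It i \<and> w' ! k \<in> sigma Cl Rt It i"
        using A.same_comp[OF w'(3)] unfolding sig_def by blast
    qed
    then show ?thesis using w' unfolding sig_def ND_def by blast
  next
    case False
    then have Hd: "\<forall>i<n. head_independent n Cl Rt It M P i" using ind by blast
    have EX: "exprop (Rt i) (Cl i) ND (rev (rho i))" if i: "i < n" for i
    proof -
      have rP: "rho i \<in> P i" using wP i unfolding rho_def by blast
      have ti: "head_independent n Cl Rt It M P i" using Hd i by blast
      obtain u v where uv: "rho i = u @ v" "set u \<subseteq> indep n Cl Rt It M i" "indep_split n Cl Rt It M i u v"
        using ti[unfolded head_independent_def, rule_format, OF rP] by blast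
      have isp: "\<forall>j<length (rho i). ((rho i ! j \<in> Cl i \<and> length u \<le> j) \<or> (rho i ! j \<in> Rt i \<and> j < length u)) \<longrightarrow>
        (\<exists>k. (matched (Cl i) (Rt i) (rho i) j k \<or> matched (Cl i) (Rt i) (rho i) k j) \<and>
             (\<forall>l. min j k \<le> l \<and> l \<le> max j k \<longrightarrow> rho i ! l \<in> indep n Cl Rt It M i))"
        using uv(3) unfolding indep_split_def Let_def uv(1)[symmetric] .
      define N where "N = length (rho i)"
      show ?thesis unfolding exprop_def
      proof (intro allI impI)
        fix q assume q: "q < length (rev (rho i))" "rev (rho i) ! q \<in> Cl i"
          and "\<exists>j'. q < j' \<and> j' < length (rev (rho i)) \<and> rev (rho i) ! j' \<in> ND"
        then obtain j' where j': "q < j'" "j' < N" "rev (rho i) ! j' \<in> ND" unfolding N_def by auto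
        define Q where "Q = N - 1 - q"
        define J where "J = N - 1 - j'"
        have qN: "q < N" using q unfolding N_def by simp
        have rQ: "rho i ! Q \<in> Cl i" using q(2) qN unfolding Q_def N_def by (simp add: rev_nth)
        have rJ: "rho i ! J \<in> ND" using j' unfolding J_def N_def by (simp add: rev_nth)
        have JQ: "J < Q" "Q < N" unfolding J_def Q_def using j' qN by auto
        have "length u \<le> J"
        proof (rule ccontr)
          assume "\<not> length u \<le> J"
          then have "rho i ! J \<in> set u" using uv(1) by (simp add: nth_append)
          then show False using notND[OF i] rJ uv(2) JQ unfolding N_def by auto
        qed
        then have Qu: "length u \<le> Q" using JQ by simp
        obtain k where k: "matched (Cl i) (Rt i) (rho i) Q k \<or> matched (Cl i) (Rt i) (rho i) k Q"
          "\<forall>l. min Q k \<le> l \<and> l \<le> max Q k \<longrightarrow> rho i ! l \<in> indep n Cl Rt It M i"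
          using isp[rule_format, of Q] rQ Qu JQ unfolding N_def by blast
        have "\<not> matched (Cl i) (Rt i) (rho i) k Q" using rQ CRdisj[OF i] unfolding matched_def by blast
        then have m: "matched (Cl i) (Rt i) (rho i) Q k" using k(1) by blast
        then have Qk: "Q < k" "k < N" unfolding matched_def N_def by auto
        have m2: "matched (Rt i) (Cl i) (rev (rho i)) (N - 1 - k) (N - 1 - Q)"
          using matched_rev[of "Cl i" "Rt i" "rev (rho i)" Q k] m unfolding N_def by simp
        have NQ: "N - 1 - Q = q" unfolding Q_def using qN by simp
        define k' where "k' = N - 1 - k"
        have m3: "k' < q" "rev (rho i) ! k' \<in> Rt i"
          "well_matched (Rt i) (Cl i) (take (q - k' - 1) (drop (k' + 1) (rev (rho i))))"
          using m2 unfolding NQ k'_def[symmetric] matched_def by auto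
        have "bal (Rt i) (Cl i) (take (q - k' - 1) (drop (k' + 1) (rev (rho i)))) = 0"
          using wm_bal[OF m3(3)] CRdisj[OF i] by blast
        moreover have "rev (rho i) ! l \<notin> ND" if l: "k' \<le> l" "l \<le> q" for l
        proof -
          have "rev (rho i) ! l = rho i ! (N - 1 - l)" using l qN unfolding N_def by (simp add: rev_nth)
          moreover have "min Q k \<le> N - 1 - l" "N - 1 - l \<le> max Q k" "N - 1 - l < N"
            using l Qk qN unfolding k'_def Q_def by auto
          ultimately show ?thesis using k(2) notND[OF i] unfolding N_def by fastforce
        qed
        ultimately show "\<exists>k'<q. rev (rho i) ! k' \<in> Rt i \<and> bal (Rt i) (Cl i) (take (q - k' - 1) (drop (k' + 1) (rev (rho i)))) = 0 \<and>
          (\<forall>l. k' \<le> l \<and> l \<le> q \<longrightarrow> rev (rho i) ! l \<notin> ND)" using m3 by blast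
      qed
    qed
    have rH1: "\<forall>m. bal (Rt i) (Cl i) (take m (rev (rho i))) \<ge> 0" if i: "i < n" for i
    proof
      fix m
      have e: "rho i = rev (drop m (rev (rho i))) @ rev (take m (rev (rho i)))"
        by (metis append_take_drop_id rev_append rev_rev_ident)
      have "rev (drop m (rev (rho i))) = take (length (rho i) - m) (rho i)" by (simp add: rev_drop)
      then have "bal (Cl i) (Rt i) (take m (rev (rho i))) \<le> 0" using rwm[OF i] e
        by (metis bal_append bal_rev add_le_same_cancel1)
      then show "bal (Rt i) (Cl i) (take m (rev (rho i))) \<ge> 0" using bal_swap[OF CRdisj[OF i]] by (simp add: bal_swap)
    qed
    have rH2: "bal (Rt i) (Cl i) (rev (rho i)) = 0" if i: "i < n" for i
      using rwm[OF i] bal_swap[of "Cl i" "Rt i"] CRdisj[OF i] by simp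
    have frev: "filter (\<lambda>a. a \<in> sig i) (rev w) = rev (rho i)" for i unfolding rho_def by (simp add: rev_filter)
    obtain w'' where w'': "\<forall>i<n. filter (\<lambda>a. a \<in> sig i) w'' = filter (\<lambda>a. a \<in> sig i) (rev w)"
      "filter (\<lambda>a. a \<in> ND) w'' = filter (\<lambda>a. a \<in> ND) (rev w)" "set w'' \<subseteq> (\<Union>i<n. sig i)"
      "run (\<Union>i<n. Rt i) (\<Union>i<n. Cl i) cmp [] w'' \<noteq> None"
      using B.core[of "rev w"] wU rH1 rH2 EX unfolding frev by auto
    define w' where "w' = rev w''"
    have "well_nested n Cl Rt It w'" unfolding well_nested_def
    proof (intro allI impI)
      fix j k assume m: "matched (\<Union>i<n. Cl i) (\<Union>i<n. Rt i) w' j k"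
      have m': "matched (\<Union>i<n. Rt i) (\<Union>i<n. Cl i) w'' (length w'' - 1 - k) (length w'' - 1 - j)"
        using matched_rev m unfolding w'_def by blast
      have "cmp (w'' ! (length w'' - 1 - k)) = cmp (w'' ! (length w'' - 1 - j))" using run_nested[OF B.CLRT w''(4) m'] .
      moreover have jk: "j < length w''" "k < length w''" using m unfolding matched_def w'_def by auto
      moreover have "length w'' - 1 - k < length w''" "length w'' - 1 - j < length w''" using jk by auto
      ultimately obtain i where i: "i < n" "w'' ! (length w'' - 1 - k) \<in> sig i" "w'' ! (length w'' - 1 - j) \<in> sig i"
        using B.same_comp[OF w''(3)] by blast
      have "w' ! j = w'' ! (length w'' - 1 - j)" "w' ! k = w'' ! (length w'' - 1 - k)"
        using jk unfolding w'_def by (simp_all add: rev_nth)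
      then show "\<exists>i<n. w' ! j \<in> sigma Cl Rt It i \<and> w' ! k \<in> sigma Cl Rt It i"
        using i unfolding sig_def by auto
    qed
    moreover have "\<forall>i<n. filter (\<lambda>a. a \<in> sig i) w' = filter (\<lambda>a. a \<in> sig i) w"
      using w''(1) unfolding w'_def by (metis rev_filter rev_rev_ident)
    moreover have "filter (\<lambda>a. a \<in> ND) w' = filter (\<lambda>a. a \<in> ND) w"
      using w''(2) unfolding w'_def by (metis rev_filter rev_rev_ident)
    moreover have "set w' \<subseteq> (\<Union>i<n. sig i)" using w''(3) unfolding w'_def by simp
    ultimately show ?thesis unfolding sig_def ND_def by blast
  qed
qed



lemma fp_via:
  assumes "filter P w' = filter P w" "set w \<subseteq> U" "set w' \<subseteq> U" "\<forall>z\<in>U. (z = x \<or> z = y) \<longrightarrow> P z"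
  shows "fp x y w = fp x y w'"
proof -
  have e: "fp x y v = filter (\<lambda>z. z = x \<or> z = y) (filter P v)" if v: "set v \<subseteq> U" for v
  proof -
    have "filter (\<lambda>z. z = x \<or> z = y) v = filter (\<lambda>z. P z \<and> (z = x \<or> z = y)) v"
    proof (rule filter_cong[OF refl])
      fix z assume "z \<in> set v"
      then have "z \<in> U" using v by blast
      then show "(z = x \<or> z = y) = (P z \<and> (z = x \<or> z = y))" using assms(4) by blast
    qed
    then show ?thesis unfolding fp_def filter_filter .
  qed
  have "fp x y w = filter (\<lambda>z. z = x \<or> z = y) (filter P w)" by (rule e[OF assms(2)])
  also have "\<dots> = filter (\<lambda>z. z = x \<or> z = y) (filter P w')" by (simp only: assms(1))
  also have "\<dots> = fp x y w'" by (rule e[OF assms(3), symmetric])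
  finally show ?thesis .
qed


theorem theorem5p3:
  fixes n :: nat
    and Cl Rt It :: "nat \<Rightarrow> 'a set"
    and P :: "nat \<Rightarrow> 'a list set"
    and M :: "'a \<Rightarrow> ('c \<times> 'c) set"
  assumes vp: "\<forall>i<n. vp_alphabet (Cl i) (Rt i) (It i)"
    and disj: "\<forall>i<n. \<forall>j<n. i \<noteq> j \<longrightarrow> sigma Cl Rt It i \<inter> sigma Cl Rt It j = {}"
    and lang: "\<forall>i<n. P i \<subseteq> lists (sigma Cl Rt It i)"
    and isvpl: "\<forall>i<n. vpl (Cl i) (Rt i) (It i) (P i)"
    and wm: "\<forall>i<n. \<forall>\<rho> \<in> P i. well_matched (Cl i) (Rt i) \<rho>"
    and cr_indep: "\<forall>i<n. Cl i \<union> Rt i \<subseteq> indep n Cl Rt It M i"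
    and ind: "(\<forall>i<n. tail_independent n Cl Rt It M P i) \<or>
              (\<forall>i<n. head_independent n Cl Rt It M P i)"
  shows "\<forall>pre post. hoare M pre (nested_shuffle n Cl Rt It P) post \<longrightarrow>
                    hoare M pre (shuffle n Cl Rt It P) post"
proof (intro allI impI)
  fix pre post
  assume hn: "hoare M pre (nested_shuffle n Cl Rt It P) post"
  define sig where "sig = sigma Cl Rt It"
  define U where "U = (\<Union>i<n. sig i)"
  define ND where "ND = NDs n Cl Rt It M"
  show "hoare M pre (shuffle n Cl Rt It P) post" unfolding hoare_def
  proof (intro ballI allI impI)
    fix \<rho> s s'
    assume r: "\<rho> \<in> shuffle n Cl Rt It P" and ss: "(s, s') \<in> sem_word M \<rho>" and sp: "s \<in> pre"
    obtain w' where w': "\<forall>i<n. filter (\<lambda>a. a \<in> sig i) w' = filter (\<lambda>a. a \<in> sig i) \<rho>"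
      "filter (\<lambda>a. a \<in> ND) w' = filter (\<lambda>a. a \<in> ND) \<rho>" "set w' \<subseteq> U" "well_nested n Cl Rt It w'"
      using key[OF vp disj wm cr_indep ind r] unfolding sig_def ND_def U_def by blast
    have rU: "set \<rho> \<subseteq> U" and rP: "\<forall>i<n. filter (\<lambda>a. a \<in> sig i) \<rho> \<in> P i"
      using r unfolding shuffle_def U_def sig_def by auto
    have l1: "w' \<in> lists (\<Union>i<n. sigma Cl Rt It i)" using w'(3) unfolding U_def sig_def lists_eq_set by simp
    have l2: "\<forall>i<n. filter (\<lambda>a. a \<in> sigma Cl Rt It i) w' \<in> P i" using w'(1) rP unfolding sig_def by simp
    have "w' \<in> nested_shuffle n Cl Rt It P"
      using l1 l2 w'(4) by (simp add: nested_shuffle_def shuffle_def)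
    have "fp x y \<rho> = fp x y w'" if D: "x = y \<or> \<not> sound_commute M x y" for x y
    proof -
      have NDi: "a \<in> ND" if "i < n" "a \<in> sig i" "a \<notin> indep n Cl Rt It M i" for i a
        using that unfolding ND_def NDs_def sig_def by blast
      show ?thesis
      proof (cases "x \<in> U")
        case xU: True
        then obtain i where i: "i < n" "x \<in> sig i" unfolding U_def by blast
        show ?thesis
        proof (cases "y \<in> U")
          case yU: True
          then obtain j where j: "j < n" "y \<in> sig j" unfolding U_def by blast
          show ?thesis
          proof (cases "i = j")
            case True
            show ?thesis by (rule fp_via[OF w'(1)[rule_format, OF i(1)] rU w'(3)]) (use i j True in blast)
          next
            case False
            have "sig i \<inter> sig j = {}" using disj i(1) j(1) False unfolding sig_def by blast
            then have "x \<noteq> y" using i(2) j(2) by blast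
            then have nc: "\<not> sound_commute M x y" using D by blast
            have ji: "j \<noteq> i" using False by simp
            have "x \<notin> indep n Cl Rt It M i"
            proof
              assume "x \<in> indep n Cl Rt It M i"
              then have "\<forall>j'<n. j' \<noteq> i \<longrightarrow> (\<forall>b\<in>sig j'. sound_commute M x b)"
                unfolding indep_def sig_def by blast
              then have "sound_commute M x y" using j(1) ji j(2) by blast
              then show False using nc by simp
            qed
            moreover have "y \<notin> indep n Cl Rt It M j"
            proof
              assume "y \<in> indep n Cl Rt It M j"
              then have "\<forall>j'<n. j' \<noteq> j \<longrightarrow> (\<forall>b\<in>sig j'. sound_commute M y b)"
                unfolding indep_def sig_def by blast
              moreover have "i \<noteq> j" using False by simp
              ultimately have "sound_commute M y x" using i(1) i(2) by blast
              then show False using nc sc_sym[of M y x] by simp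
            qed
            ultimately have xy: "x \<in> ND" "y \<in> ND" using NDi[OF i] NDi[OF j] by simp_all
            show ?thesis by (rule fp_via[OF w'(2) rU w'(3)]) (use xy in blast)
          qed
        next
          case False
          show ?thesis by (rule fp_via[OF w'(1)[rule_format, OF i(1)] rU w'(3)]) (use i False in blast)
        qed
      next
        case xU: False
        show ?thesis
        proof (cases "y \<in> U")
          case True
          then obtain j where j: "j < n" "y \<in> sig j" unfolding U_def by blast
          show ?thesis by (rule fp_via[OF w'(1)[rule_format, OF j(1)] rU w'(3)]) (use j xU in blast)
        next
          case False
          show ?thesis by (rule fp_via[OF w'(2) rU w'(3)]) (use xU False in blast)
        qed
      qed
    qed
    then have "sem_word M \<rho> = sem_word M w'" by (intro proj_sem) blast
    then have "(s, s') \<in> sem_word M w'" using ss by simp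
    then show "s' \<in> post" using hn \<open>w' \<in> nested_shuffle n Cl Rt It P\<close> sp unfolding hoare_def by blast
  qed
qed


end
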